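(* Let $A$ be a non-deterministic timed automaton and let $\widetilde{A}$ be its discretized timed automaton. Then $$d(\mathfrak{L}(A),\mathfrak{L}(\widetilde{A}))\le \tfrac12,$$ where for timed languages $d(\mathfrak{L}_1,\mathfrak{L}_2)=\max\{c(\mathfrak{L}_1,\mathfrak{L}_2),c(\mathfrak{L}_2,\mathfrak{L}_1)\}$.
   Context: **Timed automata.** A non-deterministic timed automaton is a tuple $A=(\mathcal{Q},q_0,\mathcal{F},\Sigma,\mathcal{C},\mathcal{T})$ with: - a finite set $\mathcal{Q}$ of locations, an initial location $q_0$, and accepting locations $\mathcal{F}$; - a finite action set $\Sigma$ and a finite clock set $\mathcal{C}$; - transitions $(q,a,g,\mathcal{C}_{rst},q')$, where the guard $g$ is a conjunction of constraints $c\sim n$ with $\sim\in\{<,\le,=,\ge,>\}$, and $\mathcal{C}_{rst}$ is the set of clocks that are reset. Guard constants are normally in $\mathbb{N}_0$; constants in $\frac12\mathbb{N}_0$ are also allowed, with the same semantics. Runs start in $(q_0,\mathbf{0})$ and alternate delays $(q,v)\xrightarrow{d}(q,v+d)$ with jumps $(q,v)\xrightarrow{a}(q',v[\mathcal{C}_{rst}])$. A jump along a transition is allowed only if $v$ satisfies its guard. A run with delays $d_1,\dots,d_k$ and actions $a_1,\dots,a_k$ induces the timed trace $(t_1,a_1),\dots,(t_k,a_k)$ with $t_i=\sum_{j\le i}d_j$. The language $\mathfrak{L}(A)$ consists of the timed traces of runs ending in an accepting location. **Distances.** $d(\tau_1,\tau_2)=\infty$ if the two traces differ in length or in some action. Otherwise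 $d(\tau_1,\tau_2)=\max_i|t^{1}_i-t^{2}_i|$. The conformance distance is $c(\mathfrak{L}_1,\mathfrak{L}_2)=\sup_{\tau_1\in\mathfrak{L}_1}\inf_{\tau_2\in\mathfrak{L}_2}d(\tau_1,\tau_2)$. **Augmented region automaton $\mathfrak{R}^t(A)$.** - Let $A$ have clocks $x_1,\dots,x_s$ and let $M$ be the largest constant in its guards. Add a clock $t=x_0$ that measures absolute time: it is never reset and does not occur in guards. - A region is a pair $(\mathbf n,\Delta)$, where $\mathbf n\in\{0,1,\dots,M,\top\}^s$ gives the integral parts of $x_1,\dots,x_s$ ($\top$ means the value exceeds $M$). $\Delta$ is an ordering $0\preceq_0\{x_{i_0}\}\preceq_1\cdots\preceq_s\{x_{i_s}\}<1$ of the fractional parts of $x_0,\dots,x_s$, with each $\preceq_j\in\{=,<\}$. The integral part of $t$ is not recorded; only whether $\{t\}=0$ and its order relative to the other fractional parts. - Vertices are pairs $(q,r)$ with $q$ a location and $r$ a region. The initial vertex is $(q_0,\mathbf 0,\mathbf 0)$. - There is an edge $(q,r)\xrightarrow{a}(q',r')$ of weight $m\in\mathbb{N}_0$ iff some run of $A$ (extended by $t$) contains $(q,v)\xrightarrow{d}(q,v+d)\xrightarrow{a}(q',v')$ with $v\in r$, $v'\in r'$ and $m=\lfloor v'(t)\rfloor-\lfloor v(t)\rfloor$. - Parallel edges with different weights may exist. An infinite set of consecutive weights $m,m+1,m+2,\dots$ between the same two vertices is represented by one edge of weight $m^*$. **Discretized timed automaton $\widetilde{A}$.** - It has the same vertices,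 initial vertex, edges and action labels as $\mathfrak{R}^t(A)$. A vertex $(q,r)$ is accepting iff $q\in\mathcal{F}$. - It has a single clock $t$, reset on every transition. - For an edge $e$ whose source region has fractional part of $t$ equal to $\{t_0\}$ and whose target region has $\{t_1\}$, let $\delta=\frac12(\lceil\{t_1\}\rceil-\lceil\{t_0\}\rceil)\in\{-\frac12,0,\frac12\}$. - The guard of $e$ is $t=w(e)+\delta$ if its weight is $w(e)=m$, and $t\ge m+\delta$ if its weight is $m^*$. *)

theory Defs
  imports Complex_Main "HOL-Library.Extended_Real"
begin

datatype cmp = Lt | Le | Eq | Ge | Gt

type_synonym 'c guard = "('c \<times> cmp \<times> real) list"

record ('q, 'a, 'c) ta =
  locs  :: "'q set"
  init  :: "'q"
  acc   :: "'q set"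
  acts  :: "'a set"
  clks  :: "'c set"
  trans :: "('q \<times> 'a \<times> 'c guard \<times> 'c set \<times> 'q) set"

fun cmp_sem :: "cmp \<Rightarrow> real \<Rightarrow> real \<Rightarrow> bool" where
  "cmp_sem Lt x n = (x < n)"
| "cmp_sem Le x n = (x \<le> n)"
| "cmp_sem Eq x n = (x = n)"
| "cmp_sem Ge x n = (x \<ge> n)"
| "cmp_sem Gt x n = (x > n)"

definition sat :: "'c guard \<Rightarrow> ('c \<Rightarrow> real) \<Rightarrow> bool" where
  "sat g v \<longleftrightarrow> (\<forall>(c, op, n) \<in> set g. cmp_sem op (v c) n)"

definition shift :: "('c \<Rightarrow> real) \<Rightarrow> real \<Rightarrow> ('c \<Rightarrow> real)" where
  "shift v d = (\<lambda>c. v c + d)"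

definition reset :: "'c set \<Rightarrow> ('c \<Rightarrow> real) \<Rightarrow> ('c \<Rightarrow> real)" where
  "reset R v = (\<lambda>c. if c \<in> R then 0 else v c)"

definition wf_ta :: "('q, 'a, 'c) ta \<Rightarrow> bool" where
  "wf_ta A \<longleftrightarrow> finite (locs A) \<and> init A \<in> locs A \<and> acc A \<subseteq> locs A \<and>
     finite (acts A) \<and> finite (clks A) \<and> finite (trans A) \<and>
     (\<forall>(q, a, g, R, q') \<in> trans A. q \<in> locs A \<and> q' \<in> locs A \<and> a \<in> acts A \<and>
        R \<subseteq> clks A \<and> (\<forall>(c, op, n) \<in> set g. c \<in> clks A \<and> n \<in> \<nat>))"

text \<open>A run fragment: from location q with valuation v at absolute time T, producing the
  timed trace tr (with absolute time stamps), ending in location q' with valuation v' at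
  absolute time T'.\<close>
inductive ta_run :: "('q, 'a, 'c) ta \<Rightarrow> 'q \<Rightarrow> ('c \<Rightarrow> real) \<Rightarrow> real
    \<Rightarrow> (real \<times> 'a) list \<Rightarrow> 'q \<Rightarrow> ('c \<Rightarrow> real) \<Rightarrow> real \<Rightarrow> bool"
  for A where
  run_nil: "ta_run A q v T [] q v T"
| run_step: "\<lbrakk> d \<ge> 0; (q, a, g, R, q1) \<in> trans A; sat g (shift v d);
     ta_run A q1 (reset R (shift v d)) (T + d) tr q' v' T' \<rbrakk>
   \<Longrightarrow> ta_run A q v T ((T + d, a) # tr) q' v' T'"

definition lang :: "('q, 'a, 'c) ta \<Rightarrow> (real \<times> 'a) list set" where
  "lang A = {tr. \<exists>q' v' T'. ta_run A (init A) (\<lambda>_. 0) 0 tr q' v' T' \<and> q' \<in> acc A}"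

definition trace_dist :: "(real \<times> 'a) list \<Rightarrow> (real \<times> 'a) list \<Rightarrow> ereal" where
  "trace_dist t1 t2 =
     (if map snd t1 = map snd t2
      then ereal (Max (insert 0 {\<bar>fst (t1 ! i) - fst (t2 ! i)\<bar> | i. i < length t1}))
      else \<infinity>)"

definition conf_dist :: "(real \<times> 'a) list set \<Rightarrow> (real \<times> 'a) list set \<Rightarrow> ereal" where
  "conf_dist L1 L2 = (SUP t1\<in>L1. INF t2\<in>L2. trace_dist t1 t2)"

definition lang_dist :: "(real \<times> 'a) list set \<Rightarrow> (real \<times> 'a) list set \<Rightarrow> ereal" where
  "lang_dist L1 L2 = max (conf_dist L1 L2) (conf_dist L2 L1)"

text \<open>Extended valuations: clock None is the absolute-time clock t.\<close>
definition ext :: "('c \<Rightarrow> real) \<Rightarrow> real \<Rightarrow> ('c option \<Rightarrow> real)" where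
  "ext v T = (\<lambda>x. case x of None \<Rightarrow> T | Some c \<Rightarrow> v c)"

definition max_const :: "('q, 'a, 'c) ta \<Rightarrow> real" where
  "max_const A = Max (insert 0 {n. \<exists>(q, a, g, R, q') \<in> trans A. \<exists>c op. (c, op, n) \<in> set g})"

definition region_equiv :: "('q, 'a, 'c) ta \<Rightarrow> ('c option \<Rightarrow> real) \<Rightarrow> ('c option \<Rightarrow> real) \<Rightarrow> bool" where
  "region_equiv A u w \<longleftrightarrow>
     (\<forall>c \<in> clks A. (u (Some c) > max_const A \<longleftrightarrow> w (Some c) > max_const A) \<and>
        (u (Some c) \<le> max_const A \<longrightarrow> \<lfloor>u (Some c)\<rfloor> = \<lfloor>w (Some c)\<rfloor>)) \<and>
     (\<forall>x \<in> insert None (Some ` clks A). (frac (u x) = 0 \<longleftrightarrow> frac (w x) = 0)) \<and>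
     (\<forall>x \<in> insert None (Some ` clks A). \<forall>y \<in> insert None (Some ` clks A).
        (frac (u x) \<le> frac (u y) \<longleftrightarrow> frac (w x) \<le> frac (w y)))"

definition region_of :: "('q, 'a, 'c) ta \<Rightarrow> ('c option \<Rightarrow> real) \<Rightarrow> ('c option \<Rightarrow> real) set" where
  "region_of A u = {w. region_equiv A u w}"

definition regions :: "('q, 'a, 'c) ta \<Rightarrow> ('c option \<Rightarrow> real) set set" where
  "regions A = range (region_of A)"

definition edge_weights :: "('q, 'a, 'c) ta \<Rightarrow> 'q \<Rightarrow> ('c option \<Rightarrow> real) set \<Rightarrow> 'a
    \<Rightarrow> 'q \<Rightarrow> ('c option \<Rightarrow> real) set \<Rightarrow> nat set" where
  "edge_weights A q r a q' r' =
     {m. \<exists>tr v T d g R. ta_run A (init A) (\<lambda>_. 0) 0 tr q v T \<and> ext v T \<in> r \<and>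
        d \<ge> 0 \<and> (q, a, g, R, q') \<in> trans A \<and> sat g (shift v d) \<and>
        ext (reset R (shift v d)) (T + d) \<in> r' \<and>
        int m = \<lfloor>T + d\<rfloor> - \<lfloor>T\<rfloor>}"

text \<open>An infinite set of consecutive weights m, m+1, ... is represented by one edge of weight
  m*; we take the maximal such tail, i.e. the least such m.\<close>
definition has_tail :: "nat set \<Rightarrow> bool" where
  "has_tail W \<longleftrightarrow> (\<exists>m. \<forall>k\<ge>m. k \<in> W)"

definition tail_start :: "nat set \<Rightarrow> nat" where
  "tail_start W = (LEAST m. \<forall>k\<ge>m. k \<in> W)"

text \<open>ceil of the fractional part of t in a region (0 or 1), which is determined by the region.\<close>
definition frac_flag :: "('c option \<Rightarrow> real) set \<Rightarrow> real" where
  "frac_flag r = (if \<exists>u \<in> r. frac (u None) \<noteq> 0 then 1 else 0)"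

definition shift_delta :: "('c option \<Rightarrow> real) set \<Rightarrow> ('c option \<Rightarrow> real) set \<Rightarrow> real" where
  "shift_delta r r' = (frac_flag r' - frac_flag r) / 2"

definition discretize :: "('q, 'a, 'c) ta \<Rightarrow> ('q \<times> ('c option \<Rightarrow> real) set, 'a, unit) ta" where
  "discretize A = \<lparr>
     locs = locs A \<times> regions A,
     init = (init A, region_of A (\<lambda>_. 0)),
     acc = {(q, r). q \<in> acc A \<and> r \<in> regions A},
     acts = acts A,
     clks = {()},
     trans =
       {((q, r), a, [((), Eq, real m + shift_delta r r')], {()}, (q', r')) | q r a q' r' m.
          q \<in> locs A \<and> q' \<in> locs A \<and> r \<in> regions A \<and> r' \<in> regions A \<and>
          m \<in> edge_weights A q r a q' r' \<and>
          (has_tail (edge_weights A q r a q' r') \<longrightarrow> m < tail_start (edge_weights A q r a q' r'))}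
       \<union>
       {((q, r), a, [((), Ge, real (tail_start (edge_weights A q r a q' r')) + shift_delta r r')],
          {()}, (q', r')) | q r a q' r'.
          q \<in> locs A \<and> q' \<in> locs A \<and> r \<in> regions A \<and> r' \<in> regions A \<and>
          has_tail (edge_weights A q r a q' r')}
   \<rparr>"

end

theory Submission
  imports Defs
begin


definition XS :: "('q,'a,'c) ta \<Rightarrow> 'c option set" where
  "XS A = insert None (Some ` clks A)"

lemma re_I:
  assumes "\<And>c. c \<in> clks A \<Longrightarrow> (u (Some c) > max_const A \<longleftrightarrow> w (Some c) > max_const A)"
    and "\<And>c. c \<in> clks A \<Longrightarrow> u (Some c) \<le> max_const A \<Longrightarrow> \<lfloor>u (Some c)\<rfloor> = \<lfloor>w (Some c)\<rfloor>"
    and "\<And>x. x \<in> XS A \<Longrightarrow> (frac (u x) = 0 \<longleftrightarrow> frac (w x) = 0)"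
    and "\<And>x y. x \<in> XS A \<Longrightarrow> y \<in> XS A \<Longrightarrow> (frac (u x) \<le> frac (u y) \<longleftrightarrow> frac (w x) \<le> frac (w y))"
  shows "region_equiv A u w"
  using assms unfolding region_equiv_def XS_def by blast

lemma re_D1: "region_equiv A u w \<Longrightarrow> c \<in> clks A \<Longrightarrow> (u (Some c) > max_const A \<longleftrightarrow> w (Some c) > max_const A)"
  unfolding region_equiv_def by blast
lemma re_D2: "region_equiv A u w \<Longrightarrow> c \<in> clks A \<Longrightarrow> u (Some c) \<le> max_const A \<Longrightarrow> \<lfloor>u (Some c)\<rfloor> = \<lfloor>w (Some c)\<rfloor>"
  unfolding region_equiv_def by blast
lemma re_D3: "region_equiv A u w \<Longrightarrow> x \<in> XS A \<Longrightarrow> (frac (u x) = 0 \<longleftrightarrow> frac (w x) = 0)"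
  unfolding region_equiv_def XS_def by blast
lemma re_D4: "region_equiv A u w \<Longrightarrow> x \<in> XS A \<Longrightarrow> y \<in> XS A \<Longrightarrow> (frac (u x) \<le> frac (u y) \<longleftrightarrow> frac (w x) \<le> frac (w y))"
  unfolding region_equiv_def XS_def by blast

lemma re_refl: "region_equiv A u u"
  by (rule re_I) auto

lemma re_sym: assumes "region_equiv A u w" shows "region_equiv A w u"
proof (rule re_I)
  fix c assume c: "c \<in> clks A"
  show "(w (Some c) > max_const A \<longleftrightarrow> u (Some c) > max_const A)" using re_D1[OF assms c] by blast
  assume "w (Some c) \<le> max_const A"
  then have "u (Some c) \<le> max_const A" using re_D1[OF assms c] by linarith
  then show "\<lfloor>w (Some c)\<rfloor> = \<lfloor>u (Some c)\<rfloor>" using re_D2[OF assms c] by simp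
qed (use re_D3[OF assms] re_D4[OF assms] in auto)

lemma re_trans: assumes "region_equiv A u w" "region_equiv A w z" shows "region_equiv A u z"
proof (rule re_I)
  fix c assume c: "c \<in> clks A"
  show "(u (Some c) > max_const A \<longleftrightarrow> z (Some c) > max_const A)" using re_D1[OF assms(1) c] re_D1[OF assms(2) c] by blast
  assume "u (Some c) \<le> max_const A"
  then have "w (Some c) \<le> max_const A" using re_D1[OF assms(1) c] by linarith
  then show "\<lfloor>u (Some c)\<rfloor> = \<lfloor>z (Some c)\<rfloor>" using re_D2[OF assms(1) c] re_D2[OF assms(2) c] \<open>u (Some c) \<le> max_const A\<close> by simp
qed (use re_D3[OF assms(1)] re_D4[OF assms(1)] re_D3[OF assms(2)] re_D4[OF assms(2)] in auto)

lemma int_cmp: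
  fixes x y :: real
  assumes "\<lfloor>x\<rfloor> = \<lfloor>y\<rfloor>" "frac x = 0 \<longleftrightarrow> frac y = 0"
  shows "(x < of_int k \<longleftrightarrow> y < of_int k) \<and> (x = of_int k \<longleftrightarrow> y = of_int k)"
proof -
  have "x < of_int k \<longleftrightarrow> \<lfloor>x\<rfloor> < k" by (simp add: floor_less_iff)
  moreover have "y < of_int k \<longleftrightarrow> \<lfloor>y\<rfloor> < k" by (simp add: floor_less_iff)
  moreover have "x = of_int k \<longleftrightarrow> \<lfloor>x\<rfloor> = k \<and> frac x = 0"
    unfolding frac_def by auto
  moreover have "y = of_int k \<longleftrightarrow> \<lfloor>y\<rfloor> = k \<and> frac y = 0"
    unfolding frac_def by auto
  ultimately show ?thesis using assms by auto
qed

lemma cmp_sem_int: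
  fixes x y :: real
  assumes "\<lfloor>x\<rfloor> = \<lfloor>y\<rfloor>" "frac x = 0 \<longleftrightarrow> frac y = 0"
  shows "cmp_sem op x (of_int k) \<longleftrightarrow> cmp_sem op y (of_int k)"
  using int_cmp[OF assms, of k] by (cases op) auto



definition CS :: "('q,'a,'c) ta \<Rightarrow> real set" where
  "CS A = {n. \<exists>(q, a, g, R, q') \<in> trans A. \<exists>c op. (c, op, n) \<in> set g}"

lemma CS_finite: assumes "finite (trans A)" shows "finite (CS A)"
proof -
  have "CS A \<subseteq> (\<Union>\<tau>\<in>trans A. (\<lambda>(c,op,n). n) ` set (fst (snd (snd \<tau>))))"
    unfolding CS_def by force
  moreover have "finite (\<Union>\<tau>\<in>trans A. (\<lambda>(c,op,n). n) ` set (fst (snd (snd \<tau>))))"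
    using assms by auto
  ultimately show ?thesis by (rule finite_subset)
qed

lemma max_const_CS: "max_const A = Max (insert 0 (CS A))"
  unfolding max_const_def CS_def by simp

lemma wf_guard:
  assumes "wf_ta A" "(q,a,g,R,q') \<in> trans A" "(c,op,n) \<in> set g"
  shows "c \<in> clks A \<and> n \<in> \<nat> \<and> n \<le> max_const A"
proof -
  have fin: "finite (trans A)" using assms(1) unfolding wf_ta_def by blast
  have "n \<in> CS A" unfolding CS_def using assms(2,3) by blast
  then have "n \<le> max_const A" unfolding max_const_CS using CS_finite[OF fin] by simp
  moreover have "c \<in> clks A \<and> n \<in> \<nat>" using assms unfolding wf_ta_def by fastforce
  ultimately show ?thesis by blast
qed

lemma max_const_nat: assumes "wf_ta A" shows "\<exists>k::nat. max_const A = real k"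
proof -
  have fin: "finite (trans A)" using assms(1) unfolding wf_ta_def by blast
  have "max_const A \<in> insert 0 (CS A)" unfolding max_const_CS
    using CS_finite[OF fin] by (intro Max_in) auto
  moreover have "\<forall>n\<in>CS A. n \<in> \<nat>" unfolding CS_def using assms unfolding wf_ta_def by fastforce
  ultimately have "max_const A \<in> \<nat>" by auto
  then show ?thesis by (auto elim: Nats_cases)
qed

lemma XS_Some: "c \<in> clks A \<Longrightarrow> Some c \<in> XS A" unfolding XS_def by auto
lemma XS_None: "None \<in> XS A" unfolding XS_def by auto

lemma ext_Some[simp]: "ext v T (Some c) = v c" unfolding ext_def by simp
lemma ext_None[simp]: "ext v T None = T" unfolding ext_def by simp

lemma sat_equiv:
  assumes wf: "wf_ta A" and tr: "(q,a,g,R,q') \<in> trans A"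
    and eq: "region_equiv A (ext v T) (ext w T')" and s: "sat g v"
  shows "sat g w"
  unfolding sat_def
proof (intro ballI, clarify)
  fix c op n assume cn: "(c, op, n) \<in> set g"
  from wf_guard[OF wf tr cn] have c: "c \<in> clks A" and nN: "n \<in> \<nat>" and nM: "n \<le> max_const A" by auto
  from s cn have sv: "cmp_sem op (v c) n" unfolding sat_def by auto
  obtain k :: nat where nk: "n = real k" using nN by (auto elim: Nats_cases)
  show "cmp_sem op (w c) n"
  proof (cases "v c > max_const A")
    case True
    then have "w c > max_const A" using re_D1[OF eq c] by simp
    then show ?thesis using True sv nM by (cases op) auto
  next
    case False
    then have f: "\<lfloor>v c\<rfloor> = \<lfloor>w c\<rfloor>" using re_D2[OF eq c] by simp
    have z: "frac (v c) = 0 \<longleftrightarrow> frac (w c) = 0" using re_D3[OF eq XS_Some[OF c]] by simp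
    have "cmp_sem op (v c) (of_int (int k)) \<longleftrightarrow> cmp_sem op (w c) (of_int (int k))"
      by (rule cmp_sem_int[OF f z])
    then show ?thesis using sv nk by simp
  qed
qed

lemma ext_reset: "ext (reset R v) T x = (if (\<exists>c. x = Some c \<and> c \<in> R) then 0 else ext v T x)"
  unfolding ext_def reset_def by (cases x) auto

lemma reset_equiv:
  assumes eq: "region_equiv A (ext v T) (ext w T')"
  shows "region_equiv A (ext (reset R v) T) (ext (reset R w) T')"
proof (rule re_I)
  fix c assume c: "c \<in> clks A"
  show "(ext (reset R v) T (Some c) > max_const A \<longleftrightarrow> ext (reset R w) T' (Some c) > max_const A)"
    using re_D1[OF eq c] by (simp add: reset_def)
  show "ext (reset R v) T (Some c) \<le> max_const A \<Longrightarrow> \<lfloor>ext (reset R v) T (Some c)\<rfloor> = \<lfloor>ext (reset R w) T' (Some c)\<rfloor>"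
    using re_D2[OF eq c] by (simp add: reset_def split: if_splits)
next
  fix x assume x: "x \<in> XS A"
  show "(frac (ext (reset R v) T x) = 0) = (frac (ext (reset R w) T' x) = 0)"
    using re_D3[OF eq x] by (cases "\<exists>c. x = Some c \<and> c \<in> R") (auto simp add: ext_reset)
next
  fix x y assume x: "x \<in> XS A" and y: "y \<in> XS A"
  have f0: "frac (0::real) = 0" by simp
  have a: "\<And>z. frac z \<le> 0 \<longleftrightarrow> frac (z::real) = 0" using frac_ge_0 by (metis order.eq_iff)
  show "(frac (ext (reset R v) T x) \<le> frac (ext (reset R v) T y)) =
        (frac (ext (reset R w) T' x) \<le> frac (ext (reset R w) T' y))"
    using re_D3[OF eq x] re_D3[OF eq y] re_D4[OF eq x y]
    by (cases "\<exists>c. x = Some c \<and> c \<in> R"; cases "\<exists>c. y = Some c \<and> c \<in> R")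
       (simp_all only: ext_reset if_True if_False a frac_ge_0 f0 simp_thms order_refl)
qed



lemma choose_e:
  fixes a b :: "'x \<Rightarrow> real"
  assumes fin: "finite X"
    and zero: "\<forall>x\<in>X. (a x = 0 \<longleftrightarrow> b x = 0)"
    and ord: "\<forall>x\<in>X. \<forall>y\<in>X. (a x \<le> a y \<longleftrightarrow> b x \<le> b y)"
    and ra: "\<forall>x\<in>X. 0 \<le> a x \<and> a x < 1" and rb: "\<forall>x\<in>X. 0 \<le> b x \<and> b x < 1"
    and fd: "0 \<le> fd" "fd < 1"
  shows "\<exists>e. 0 \<le> e \<and> e < 1 \<and> (fd = 0 \<longleftrightarrow> e = 0) \<and>
     (\<forall>x\<in>X. (a x + fd < 1 \<longleftrightarrow> b x + e < 1) \<and> (a x + fd = 1 \<longleftrightarrow> b x + e = 1))"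
proof (cases "fd = 0")
  case True
  show ?thesis by (rule exI[of _ 0]) (use True ra rb in auto)
next
  case False
  define \<theta> where "\<theta> = 1 - fd"
  have th: "0 < \<theta>" "\<theta> \<le> 1" "\<theta> < 1 \<or> True" using fd False unfolding \<theta>_def by auto
  have th1: "\<theta> < 1" using fd False unfolding \<theta>_def by auto
  show ?thesis
  proof (cases "\<exists>y\<in>X. a y = \<theta>")
    case True
    then obtain y where y: "y \<in> X" "a y = \<theta>" by blast
    have by0: "b y \<noteq> 0" using zero y th by auto
    have by1: "0 \<le> b y" "b y < 1" using rb y by auto
    show ?thesis
    proof (rule exI[of _ "1 - b y"], intro conjI ballI)
      show "0 \<le> 1 - b y" "1 - b y < 1" using by0 by1 by auto
      show "(fd = 0) = (1 - b y = 0)" using False by0 by1 by auto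
    next
      fix x assume x: "x \<in> X"
      have "a x < a y \<longleftrightarrow> b x < b y" using ord x y by (meson not_le)
      then show "(a x + fd < 1) = (b x + (1 - b y) < 1)" using y unfolding \<theta>_def by auto
    next
      fix x assume x: "x \<in> X"
      have "a x \<le> a y \<longleftrightarrow> b x \<le> b y" "a y \<le> a x \<longleftrightarrow> b y \<le> b x" using ord x y by auto
      moreover have "a x = a y \<longleftrightarrow> (a x \<le> a y \<and> a y \<le> a x)" "b x = b y \<longleftrightarrow> (b x \<le> b y \<and> b y \<le> b x)" by auto
      ultimately have "a x = a y \<longleftrightarrow> b x = b y" by simp
      then show "(a x + fd = 1) = (b x + (1 - b y) = 1)" using y unfolding \<theta>_def by auto
    qed
  next
    case noeq: False
    define L where "L = {b x | x. x \<in> X \<and> a x < \<theta>}"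
    define H where "H = {b x | x. x \<in> X \<and> a x > \<theta>}"
    have finL: "finite (insert 0 L)" unfolding L_def using fin by auto
    have finH: "finite (insert 1 H)" unfolding H_def using fin by auto
    define lo where "lo = Max (insert 0 L)"
    define hi where "hi = Min (insert 1 H)"
    have lo_in: "lo \<in> insert 0 L" unfolding lo_def using finL by (intro Max_in) auto
    have hi_in: "hi \<in> insert 1 H" unfolding hi_def using finH by (intro Min_in) auto
    have lo_ge: "\<forall>p\<in>insert 0 L. p \<le> lo" unfolding lo_def using finL by auto
    have hi_le: "\<forall>p\<in>insert 1 H. hi \<le> p" unfolding hi_def using finH by auto
    have sep: "\<forall>p\<in>insert 0 L. \<forall>q\<in>insert 1 H. p < q"
    proof (intro ballI)
      fix p q assume p: "p \<in> insert 0 L" and q: "q \<in> insert 1 H"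
      show "p < q"
      proof (cases "p = 0")
        case True
        show ?thesis
        proof (cases "q = 1")
          case True then show ?thesis using \<open>p = 0\<close> by simp
        next
          case False
          then obtain y where y: "y \<in> X" "a y > \<theta>" "q = b y" using q unfolding H_def by auto
          then have "a y \<noteq> 0" using th by auto
          then have "b y \<noteq> 0" using zero y by auto
          moreover have "0 \<le> b y" using rb y by auto
          ultimately show ?thesis using \<open>p = 0\<close> y by auto
        qed
      next
        case False
        then obtain x where x: "x \<in> X" "a x < \<theta>" "p = b x" using p unfolding L_def by auto
        show ?thesis
        proof (cases "q = 1")
          case True then show ?thesis using x rb by auto
        next
          case False
          then obtain y where y: "y \<in> X" "a y > \<theta>" "q = b y" using q unfolding H_def by auto
          have "\<not> a y \<le> a x" using x y by auto
          then have "\<not> b y \<le> b x" using ord x y by blast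
          then show ?thesis using x y by auto
        qed
      qed
    qed
    have lohi: "lo < hi" using sep lo_in hi_in by blast
    have lo0: "0 \<le> lo" using lo_ge by auto
    have hi1: "hi \<le> 1" using hi_le by auto
    define e where "e = 1 - (lo + hi) / 2"
    show ?thesis
    proof (rule exI[of _ e], intro conjI ballI)
      show "0 \<le> e" "e < 1" "(fd = 0) = (e = 0)" using lohi lo0 hi1 False unfolding e_def by auto
    next
      fix x assume x: "x \<in> X"
      have "a x \<noteq> \<theta>" using noeq x by auto
      then consider "a x < \<theta>" | "a x > \<theta>" by linarith
      then have "(a x < \<theta> \<longrightarrow> b x < 1 - e) \<and> (a x > \<theta> \<longrightarrow> b x > 1 - e)"
      proof cases
        case 1
        then have "b x \<in> insert 0 L" unfolding L_def using x by auto
        then have "b x \<le> lo" using lo_ge by auto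
        then show ?thesis using 1 lohi unfolding e_def by auto
      next
        case 2
        then have "b x \<in> insert 1 H" unfolding H_def using x by auto
        then have "hi \<le> b x" using hi_le by auto
        then show ?thesis using 2 lohi unfolding e_def by auto
      qed
      then show "(a x + fd < 1) = (b x + e < 1)" "(a x + fd = 1) = (b x + e = 1)"
        using \<open>a x \<noteq> \<theta>\<close> unfolding \<theta>_def by auto
    qed
  qed
qed



lemma XS_finite: "finite (clks A) \<Longrightarrow> finite (XS A)" unfolding XS_def by auto

lemma floor_frac_shift:
  fixes x d :: real
  shows "\<lfloor>x + d\<rfloor> = \<lfloor>x\<rfloor> + \<lfloor>d\<rfloor> + (if frac x + frac d < 1 then 0 else 1)"
    and "frac (x + d) = (if frac x + frac d < 1 then frac x + frac d else frac x + frac d - 1)"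
  by (simp_all add: floor_add frac_add)

lemma zr_arith:
  fixes a b f e :: real
  assumes "0\<le>a" "a<1" "0\<le>b" "b<1" "0\<le>f" "f<1" "0\<le>e" "e<1" "a=0\<longleftrightarrow>b=0" "f=0\<longleftrightarrow>e=0"
    "a+f<1 \<longleftrightarrow> b+e<1" "a+f=1 \<longleftrightarrow> b+e=1"
  shows "(if a+f<1 then a+f else a+f-1) = 0 \<longleftrightarrow> (if b+e<1 then b+e else b+e-1) = 0"
  using assms by (cases "a+f<1") auto

lemma ord_arith:
  fixes a1 a2 b1 b2 f e :: real
  assumes "0\<le>a1" "a1<1" "0\<le>b1" "b1<1" "0\<le>a2" "a2<1" "0\<le>b2" "b2<1" "0\<le>f" "f<1" "0\<le>e" "e<1"
    "a1 \<le> a2 \<longleftrightarrow> b1 \<le> b2"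
    "a1+f<1 \<longleftrightarrow> b1+e<1" "a2+f<1 \<longleftrightarrow> b2+e<1"
  shows "(if a1+f<1 then a1+f else a1+f-1) \<le> (if a2+f<1 then a2+f else a2+f-1) \<longleftrightarrow>
         (if b1+e<1 then b1+e else b1+e-1) \<le> (if b2+e<1 then b2+e else b2+e-1)"
  using assms by (cases "a1+f<1"; cases "a2+f<1") auto

lemma delay_bisim:
  assumes fin: "finite (clks A)" and M: "max_const A = real Mn"
    and eq: "region_equiv A u w" and d: "d \<ge> 0"
  shows "\<exists>d'\<ge>0. region_equiv A (\<lambda>x. u x + d) (\<lambda>x. w x + d') \<and>
            \<lfloor>u None + d\<rfloor> - \<lfloor>u None\<rfloor> = \<lfloor>w None + d'\<rfloor> - \<lfloor>w None\<rfloor>"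
proof -
  let ?X = "XS A"
  have "\<exists>e. 0 \<le> e \<and> e < 1 \<and> (frac d = 0 \<longleftrightarrow> e = 0) \<and>
     (\<forall>x\<in>?X. (frac (u x) + frac d < 1 \<longleftrightarrow> frac (w x) + e < 1) \<and>
               (frac (u x) + frac d = 1 \<longleftrightarrow> frac (w x) + e = 1))"
    by (rule choose_e[where a="\<lambda>x. frac (u x)" and b="\<lambda>x. frac (w x)"])
       (use XS_finite[OF fin] re_D3[OF eq] re_D4[OF eq] frac_lt_1 in auto)
  then obtain e where e: "0 \<le> e" "e < 1" "frac d = 0 \<longleftrightarrow> e = 0"
    and key: "\<forall>x\<in>?X. (frac (u x) + frac d < 1 \<longleftrightarrow> frac (w x) + e < 1) \<and>
               (frac (u x) + frac d = 1 \<longleftrightarrow> frac (w x) + e = 1)" by blast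
  define d' where "d' = real_of_int \<lfloor>d\<rfloor> + e"
  have fd': "frac d' = e" unfolding d'_def using e by simp
  have fl': "\<lfloor>d'\<rfloor> = \<lfloor>d\<rfloor>" unfolding d'_def using e by (simp add: floor_eq_iff)
  have d'0: "d' \<ge> 0" unfolding d'_def using d e by simp
  have FL: "\<lfloor>u x + d\<rfloor> - \<lfloor>u x\<rfloor> = \<lfloor>w x + d'\<rfloor> - \<lfloor>w x\<rfloor>" if x: "x \<in> ?X" for x
    using key x by (simp add: floor_frac_shift(1) fd' fl')
  have ZR: "frac (u x + d) = 0 \<longleftrightarrow> frac (w x + d') = 0" if x: "x \<in> ?X" for x
  proof -
    have z: "frac (u x) = 0 \<longleftrightarrow> frac (w x) = 0" using re_D3[OF eq x] .
    have k: "(frac (u x) + frac d < 1 \<longleftrightarrow> frac (w x) + e < 1)"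
            "(frac (u x) + frac d = 1 \<longleftrightarrow> frac (w x) + e = 1)" using key x by auto
    have r: "0 \<le> frac (u x)" "0 \<le> frac (w x)" "0 \<le> frac d" by auto
    show ?thesis unfolding floor_frac_shift(2) fd'
      by (rule zr_arith) (use z k r e frac_lt_1 in auto)
  qed
  have ORD: "frac (u x + d) \<le> frac (u y + d) \<longleftrightarrow> frac (w x + d') \<le> frac (w y + d')"
    if x: "x \<in> ?X" and y: "y \<in> ?X" for x y
  proof -
    have o: "frac (u x) \<le> frac (u y) \<longleftrightarrow> frac (w x) \<le> frac (w y)" using re_D4[OF eq x y] .
    have k: "(frac (u x) + frac d < 1 \<longleftrightarrow> frac (w x) + e < 1)"
            "(frac (u y) + frac d < 1 \<longleftrightarrow> frac (w y) + e < 1)" using key x y by auto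
    have r: "0 \<le> frac (u x)" "0 \<le> frac (w x)" "0 \<le> frac d" "0 \<le> frac (u y)" "0 \<le> frac (w y)"
      "frac (u x) < 1" "frac (w x) < 1" "frac (u y) < 1" "frac (w y) < 1" "frac d < 1"
      by (auto simp: frac_lt_1)
    show ?thesis unfolding floor_frac_shift(2) fd'
      by (rule ord_arith) (use o k r e in auto)
  qed
  have "region_equiv A (\<lambda>x. u x + d) (\<lambda>x. w x + d')"
  proof (rule re_I)
    fix c assume c: "c \<in> clks A"
    have xc: "Some c \<in> ?X" using c by (rule XS_Some)
    show "(u (Some c) + d > max_const A \<longleftrightarrow> w (Some c) + d' > max_const A)"
    proof (cases "u (Some c) > max_const A")
      case True
      then have "w (Some c) > max_const A" using re_D1[OF eq c] by simp
      then show ?thesis using True d d'0 by auto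
    next
      case False
      then have "\<lfloor>u (Some c)\<rfloor> = \<lfloor>w (Some c)\<rfloor>" using re_D2[OF eq c] by simp
      then have f: "\<lfloor>u (Some c) + d\<rfloor> = \<lfloor>w (Some c) + d'\<rfloor>" using FL[OF xc] by simp
      have "(u (Some c) + d < of_int (int Mn) \<longleftrightarrow> w (Some c) + d' < of_int (int Mn)) \<and>
            (u (Some c) + d = of_int (int Mn) \<longleftrightarrow> w (Some c) + d' = of_int (int Mn))"
        by (rule int_cmp[OF f ZR[OF xc]])
      then show ?thesis unfolding M by auto
    qed
    assume le: "u (Some c) + d \<le> max_const A"
    then have "u (Some c) \<le> max_const A" using d by simp
    then have "\<lfloor>u (Some c)\<rfloor> = \<lfloor>w (Some c)\<rfloor>" using re_D2[OF eq c] by simp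
    then show "\<lfloor>u (Some c) + d\<rfloor> = \<lfloor>w (Some c) + d'\<rfloor>" using FL[OF xc] by simp
  next
    fix x assume "x \<in> ?X" then show "(frac (u x + d) = 0) = (frac (w x + d') = 0)" by (rule ZR)
  next
    fix x y assume "x \<in> ?X" "y \<in> ?X" then show "(frac (u x + d) \<le> frac (u y + d)) = (frac (w x + d') \<le> frac (w y + d'))"
      by (rule ORD)
  qed
  then show ?thesis using FL[OF XS_None] d'0 by blast
qed



lemma ext_shift: "ext (shift v d) (T + d) = (\<lambda>x. ext v T x + d)"
  by (auto simp: ext_def shift_def split: option.split)

lemma in_region_of: "w \<in> region_of A u \<longleftrightarrow> region_equiv A u w"
  unfolding region_of_def by simp

lemma frac_flag_region:
  assumes "r \<in> regions A" "ext v T \<in> r"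
  shows "frac_flag r = (if frac T = 0 then 0 else 1)"
proof -
  obtain u where r: "r = region_of A u" using assms(1) unfolding regions_def by auto
  have e: "region_equiv A u (ext v T)" using assms(2) r in_region_of by blast
  have "(\<exists>w\<in>r. frac (w None) \<noteq> 0) \<longleftrightarrow> frac T \<noteq> 0"
  proof
    assume "\<exists>w\<in>r. frac (w None) \<noteq> 0"
    then obtain w where w: "w \<in> r" "frac (w None) \<noteq> 0" by blast
    have "region_equiv A u w" using w r in_region_of by blast
    then have "frac (u None) \<noteq> 0" using w re_D3[OF _ XS_None] by blast
    then show "frac T \<noteq> 0" using re_D3[OF e XS_None] by simp
  next
    assume "frac T \<noteq> 0" then show "\<exists>w\<in>r. frac (w None) \<noteq> 0" using assms(2) by (intro bexI[of _ "ext v T"]) auto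
  qed
  then show ?thesis unfolding frac_flag_def by auto
qed

lemma edge_step:
  assumes wf: "wf_ta A" and r: "r \<in> regions A" and r1: "r1 \<in> regions A"
    and inr: "ext v T \<in> r" and n: "n \<in> edge_weights A q r a q1 r1"
  shows "\<exists>dA g R. dA \<ge> 0 \<and> (q,a,g,R,q1) \<in> trans A \<and> sat g (shift v dA) \<and>
           ext (reset R (shift v dA)) (T + dA) \<in> r1 \<and> int n = \<lfloor>T + dA\<rfloor> - \<lfloor>T\<rfloor>"
proof -
  from n obtain tr v0 T0 d0 g R where w: "ta_run A (init A) (\<lambda>_. 0) 0 tr q v0 T0" "ext v0 T0 \<in> r"
    "d0 \<ge> 0" "(q, a, g, R, q1) \<in> trans A" "sat g (shift v0 d0)"
    "ext (reset R (shift v0 d0)) (T0 + d0) \<in> r1" "int n = \<lfloor>T0 + d0\<rfloor> - \<lfloor>T0\<rfloor>"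
    unfolding edge_weights_def by blast
  obtain u where ru: "r = region_of A u" using r unfolding regions_def by auto
  obtain u1 where ru1: "r1 = region_of A u1" using r1 unfolding regions_def by auto
  have e0: "region_equiv A (ext v0 T0) (ext v T)"
    using w(2) inr ru in_region_of re_sym re_trans by metis
  have fin: "finite (clks A)" using wf unfolding wf_ta_def by blast
  obtain Mn where M: "max_const A = real Mn" using max_const_nat[OF wf] by blast
  obtain dA where dA: "dA \<ge> 0" "region_equiv A (\<lambda>x. ext v0 T0 x + d0) (\<lambda>x. ext v T x + dA)"
    "\<lfloor>ext v0 T0 None + d0\<rfloor> - \<lfloor>ext v0 T0 None\<rfloor> = \<lfloor>ext v T None + dA\<rfloor> - \<lfloor>ext v T None\<rfloor>"
    using delay_bisim[OF fin M e0 w(3)] by blast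
  have e1: "region_equiv A (ext (shift v0 d0) (T0 + d0)) (ext (shift v dA) (T + dA))"
    using dA(2) by (simp add: ext_shift)
  have s: "sat g (shift v dA)" by (rule sat_equiv[OF wf w(4) e1 w(5)])
  have e2: "region_equiv A (ext (reset R (shift v0 d0)) (T0 + d0)) (ext (reset R (shift v dA)) (T + dA))"
    by (rule reset_equiv[OF e1])
  have "ext (reset R (shift v dA)) (T + dA) \<in> r1"
    using w(6) e2 ru1 in_region_of re_trans by metis
  moreover have "int n = \<lfloor>T + dA\<rfloor> - \<lfloor>T\<rfloor>" using w(7) dA(3) by simp
  ultimately show ?thesis using dA(1) w(4) s by blast
qed



definition warp :: "(real \<Rightarrow> real) \<Rightarrow> real \<Rightarrow> real" where
  "warp \<phi> y = real_of_int \<lfloor>y\<rfloor> + \<phi> (frac y)"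

lemma sgn_cmp:
  fixes s s' :: real and L k :: int
  assumes "-1 < s" "s < 1" "-1 < s'" "s' < 1" "s < 0 \<longleftrightarrow> s' < 0" "s = 0 \<longleftrightarrow> s' = 0"
  shows "(of_int L + s < of_int k \<longleftrightarrow> of_int L + s' < of_int k) \<and>
         (of_int L + s = of_int k \<longleftrightarrow> of_int L + s' = of_int k)"
proof -
  consider "L \<le> k - 1" | "L = k" | "L \<ge> k + 1" by linarith
  then show ?thesis
  proof cases
    case 1
    then have "real_of_int L \<le> real_of_int k - 1" by linarith
    then show ?thesis using assms by auto
  next
    case 2
    then show ?thesis using assms by auto
  next
    case 3
    then have "real_of_int L \<ge> real_of_int k + 1" by linarith
    then show ?thesis using assms by auto
  qed
qed

locale phi_ok =
  fixes \<phi> :: "real \<Rightarrow> real"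
  assumes phi0: "\<phi> 0 = 0"
    and phi_mono: "\<And>f g. 0 \<le> f \<Longrightarrow> f < g \<Longrightarrow> g < 1 \<Longrightarrow> \<phi> f < \<phi> g"
    and phi_rng: "\<And>f. 0 \<le> f \<Longrightarrow> f < 1 \<Longrightarrow> 0 \<le> \<phi> f \<and> \<phi> f < 1"
begin

lemma warp_cmp: "cmp_sem op (b - a) (of_int k) \<longleftrightarrow> cmp_sem op (warp \<phi> b - warp \<phi> a) (of_int k)"
proof -
  define L where "L = \<lfloor>b\<rfloor> - \<lfloor>a\<rfloor>"
  define s where "s = frac b - frac a"
  define s' where "s' = \<phi> (frac b) - \<phi> (frac a)"
  have ba: "b - a = of_int L + s" unfolding L_def s_def frac_def by simp
  have wba: "warp \<phi> b - warp \<phi> a = of_int L + s'" unfolding L_def s'_def warp_def by simp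
  have ra: "0 \<le> frac a" "frac a < 1" "0 \<le> frac b" "frac b < 1" by (auto simp: frac_lt_1)
  have pa: "0 \<le> \<phi> (frac a)" "\<phi> (frac a) < 1" "0 \<le> \<phi> (frac b)" "\<phi> (frac b) < 1"
    using phi_rng ra by auto
  have m1: "frac b < frac a \<Longrightarrow> \<phi> (frac b) < \<phi> (frac a)" using phi_mono ra by auto
  have m2: "frac a < frac b \<Longrightarrow> \<phi> (frac a) < \<phi> (frac b)" using phi_mono ra by auto
  have "s < 0 \<longleftrightarrow> s' < 0" unfolding s_def s'_def using m1 m2 by (cases "frac b < frac a"; cases "frac a < frac b") auto
  moreover have "s = 0 \<longleftrightarrow> s' = 0" unfolding s_def s'_def using m1 m2 by (cases "frac b < frac a"; cases "frac a < frac b") auto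
  moreover have "-1 < s" "s < 1" "-1 < s'" "s' < 1" unfolding s_def s'_def using ra pa by linarith+
  ultimately have c: "(of_int L + s < of_int k \<longleftrightarrow> of_int L + s' < of_int k) \<and>
         (of_int L + s = of_int k \<longleftrightarrow> of_int L + s' = of_int k)"
    by (intro sgn_cmp) auto
  show ?thesis unfolding ba wba using c by (cases op) auto
qed

lemma warp_0: "warp \<phi> 0 = 0" unfolding warp_def using phi0 by simp

lemma warp_mono: "d \<ge> 0 \<Longrightarrow> warp \<phi> (T + d) - warp \<phi> T \<ge> 0"
  using warp_cmp[of Ge "T + d" T 0] by simp

lemma warp_run:
  assumes ints: "\<And>q a g R q' c op n. (q,a,g,R,q') \<in> trans A \<Longrightarrow> (c,op,n) \<in> set g \<Longrightarrow> n \<in> \<int>"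
  shows "ta_run A q v T tr q' v' T' \<Longrightarrow>
    ta_run A q (\<lambda>c. warp \<phi> T - warp \<phi> (T - v c)) (warp \<phi> T) (map (\<lambda>(s,a). (warp \<phi> s, a)) tr)
      q' (\<lambda>c. warp \<phi> T' - warp \<phi> (T' - v' c)) (warp \<phi> T')"
proof (induction rule: ta_run.induct)
  case (run_nil q v T)
  then show ?case using ta_run.run_nil by simp
next
  case (run_step d q a g R q1 v T tr q' v' T')
  let ?W = "warp \<phi>"
  define V where "V = (\<lambda>c. ?W T - ?W (T - v c))"
  define dd where "dd = ?W (T + d) - ?W T"
  have dd0: "dd \<ge> 0" unfolding dd_def using warp_mono run_step.hyps(1) by simp
  have sat: "sat g (shift V dd)"
    unfolding sat_def
  proof (intro ballI, clarify)
    fix c op n assume cn: "(c, op, n) \<in> set g"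
    have "n \<in> \<int>" using ints[OF run_step.hyps(2) cn] .
    then obtain k where nk: "n = of_int k" by (auto elim: Ints_cases)
    have "cmp_sem op (shift v d c) n" using run_step.hyps(3) cn unfolding sat_def by auto
    moreover have "shift v d c = (T + d) - (T - v c)" unfolding shift_def by simp
    moreover have "shift V dd c = ?W (T + d) - ?W (T - v c)" unfolding shift_def V_def dd_def by simp
    ultimately show "cmp_sem op (shift V dd c) n" using warp_cmp[of op "T + d" "T - v c" k] nk by simp
  qed
  have rs: "reset R (shift V dd) = (\<lambda>c. ?W (T + d) - ?W (T + d - reset R (shift v d) c))"
    unfolding reset_def shift_def V_def dd_def by auto
  have tt: "?W T + dd = ?W (T + d)" unfolding dd_def by simp
  have "ta_run A q1 (reset R (shift V dd)) (?W T + dd) (map (\<lambda>(s,a). (?W s, a)) tr) q'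
          (\<lambda>c. ?W T' - ?W (T' - v' c)) (?W T')"
    using run_step.IH unfolding rs tt .
  from ta_run.run_step[OF dd0 run_step.hyps(2) sat this]
  show ?case unfolding V_def tt by simp
qed

end



definition fl :: "real \<Rightarrow> real" where "fl T = (if frac T = 0 then 0 else 1/2)"

lemma run_append:
  "ta_run A q v T tr1 q1 v1 T1 \<Longrightarrow> ta_run A q1 v1 T1 tr2 q2 v2 T2 \<Longrightarrow> ta_run A q v T (tr1 @ tr2) q2 v2 T2"
  by (induction rule: ta_run.induct) (auto intro: ta_run.intros)

lemma run_single:
  "d \<ge> 0 \<Longrightarrow> (q, a, g, R, q1) \<in> trans A \<Longrightarrow> sat g (shift v d) \<Longrightarrow>
   ta_run A q v T [(T + d, a)] q1 (reset R (shift v d)) (T + d)"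
  by (rule ta_run.run_step) (auto intro: ta_run.run_nil)

lemma trans_disc:
  "trans (discretize A) =
       {((q, r), a, [((), Eq, real m + shift_delta r r')], {()}, (q', r')) | q r a q' r' m.
          q \<in> locs A \<and> q' \<in> locs A \<and> r \<in> regions A \<and> r' \<in> regions A \<and>
          m \<in> edge_weights A q r a q' r' \<and>
          (has_tail (edge_weights A q r a q' r') \<longrightarrow> m < tail_start (edge_weights A q r a q' r'))}
       \<union>
       {((q, r), a, [((), Ge, real (tail_start (edge_weights A q r a q' r')) + shift_delta r r')],
          {()}, (q', r')) | q r a q' r'.
          q \<in> locs A \<and> q' \<in> locs A \<and> r \<in> regions A \<and> r' \<in> regions A \<and>
          has_tail (edge_weights A q r a q' r')}"
  unfolding discretize_def by simp

lemma init_disc: "init (discretize A) = (init A, region_of A (\<lambda>_. 0))" unfolding discretize_def by simp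
lemma acc_disc: "acc (discretize A) = {(q, r). q \<in> acc A \<and> r \<in> regions A}" unfolding discretize_def by simp

lemma disc_Eq:
  assumes "q \<in> locs A" "q' \<in> locs A" "r \<in> regions A" "r' \<in> regions A"
    "m \<in> edge_weights A q r a q' r'"
    "has_tail (edge_weights A q r a q' r') \<longrightarrow> m < tail_start (edge_weights A q r a q' r')"
  shows "((q, r), a, [((), Eq, real m + shift_delta r r')], {()}, (q', r')) \<in> trans (discretize A)"
  unfolding trans_disc
  apply (rule UnI1)
  apply (simp only: mem_Collect_eq)
  apply (rule exI[of _ q], rule exI[of _ r], rule exI[of _ a], rule exI[of _ q'], rule exI[of _ r'], rule exI[of _ m])
  using assms by simp

lemma disc_Ge:
  assumes "q \<in> locs A" "q' \<in> locs A" "r \<in> regions A" "r' \<in> regions A"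
    "has_tail (edge_weights A q r a q' r')"
  shows "((q, r), a, [((), Ge, real (tail_start (edge_weights A q r a q' r')) + shift_delta r r')], {()}, (q', r'))
     \<in> trans (discretize A)"
  unfolding trans_disc
  apply (rule UnI2)
  apply (simp only: mem_Collect_eq)
  apply (rule exI[of _ q], rule exI[of _ r], rule exI[of _ a], rule exI[of _ q'], rule exI[of _ r'])
  using assms by simp

lemma tail_in: assumes "has_tail W" "k \<ge> tail_start W" shows "k \<in> W"
proof -
  have "\<forall>k\<ge>tail_start W. k \<in> W" unfolding tail_start_def
    by (rule LeastI_ex) (use assms(1) in \<open>simp add: has_tail_def\<close>)
  then show ?thesis using assms(2) by blast
qed

lemma sat_single: "sat [((), op, n)] (shift (\<lambda>_. 0) dd) \<longleftrightarrow> cmp_sem op dd n"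
  unfolding sat_def shift_def by simp

lemma reset_unit: "reset {()} (f :: unit \<Rightarrow> real) = (\<lambda>_. 0)"
  unfolding reset_def by auto

lemma region_of_in: "region_of A u \<in> regions A" unfolding regions_def by (rule rangeI)
lemma self_in_region: "u \<in> region_of A u" unfolding region_of_def using re_refl by simp

lemma wf_trans_locs: "wf_ta A \<Longrightarrow> (q, a, g, R, q1) \<in> trans A \<Longrightarrow> q \<in> locs A \<and> q1 \<in> locs A"
  unfolding wf_ta_def by fastforce

lemma fl_step:
  assumes "d \<ge> 0"
  shows "real (nat (\<lfloor>T + d\<rfloor> - \<lfloor>T\<rfloor>)) + (fl (T + d) - fl T) \<ge> 0"
    and "real_of_int \<lfloor>T\<rfloor> + fl T + (real (nat (\<lfloor>T + d\<rfloor> - \<lfloor>T\<rfloor>)) + (fl (T + d) - fl T)) = real_of_int \<lfloor>T + d\<rfloor> + fl (T + d)"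
proof -
  have mono: "\<lfloor>T\<rfloor> \<le> \<lfloor>T + d\<rfloor>" using assms by (intro floor_mono) simp
  then show "real_of_int \<lfloor>T\<rfloor> + fl T + (real (nat (\<lfloor>T + d\<rfloor> - \<lfloor>T\<rfloor>)) + (fl (T + d) - fl T)) = real_of_int \<lfloor>T + d\<rfloor> + fl (T + d)"
    by simp
  show "real (nat (\<lfloor>T + d\<rfloor> - \<lfloor>T\<rfloor>)) + (fl (T + d) - fl T) \<ge> 0"
  proof (cases "\<lfloor>T + d\<rfloor> = \<lfloor>T\<rfloor>")
    case True
    have "frac T \<le> frac (T + d)" using True assms unfolding frac_def by simp
    moreover have "0 \<le> frac T" by simp
    ultimately have "frac T \<noteq> 0 \<longrightarrow> frac (T + d) \<noteq> 0" by linarith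
    then have "fl T \<le> fl (T + d)" unfolding fl_def by auto
    then show ?thesis by simp
  next
    case False
    then have "real (nat (\<lfloor>T + d\<rfloor> - \<lfloor>T\<rfloor>)) \<ge> 1" using mono by simp
    moreover have "0 \<le> fl (T + d)" "fl T \<le> 1/2" unfolding fl_def by auto
    ultimately show ?thesis by simp
  qed
qed

lemma shift_delta_fl:
  assumes "r \<in> regions A" "ext v T \<in> r" "r' \<in> regions A" "ext v' T' \<in> r'"
  shows "shift_delta r r' = fl T' - fl T"
  unfolding shift_delta_def using frac_flag_region[OF assms(1,2)] frac_flag_region[OF assms(3,4)]
  unfolding fl_def by auto

lemma dir1:
  assumes wf: "wf_ta A"
  shows "ta_run A q v T tr q' v' T' \<Longrightarrow> ta_run A (init A) (\<lambda>_. 0) 0 pre q v T \<Longrightarrow>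
   \<exists>trD. ta_run (discretize A) (q, region_of A (ext v T)) (\<lambda>_. 0) (real_of_int \<lfloor>T\<rfloor> + fl T) trD
            (q', region_of A (ext v' T')) (\<lambda>_. 0) (real_of_int \<lfloor>T'\<rfloor> + fl T') \<and>
          map snd trD = map snd tr \<and>
          (\<forall>i<length tr. fst (trD ! i) = real_of_int \<lfloor>fst (tr ! i)\<rfloor> + fl (fst (tr ! i)))"
proof (induction arbitrary: pre rule: ta_run.induct)
  case (run_nil q v T)
  show ?case by (rule exI[of _ "[]"]) (auto intro: ta_run.run_nil)
next
  case (run_step d q a g R q1 v T tr q' v' T')
  define v1 where "v1 = reset R (shift v d)"
  define T1 where "T1 = T + d"
  define r where "r = region_of A (ext v T)"
  define r1 where "r1 = region_of A (ext v1 T1)"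
  define W where "W = edge_weights A q r a q1 r1"
  define m where "m = nat (\<lfloor>T1\<rfloor> - \<lfloor>T\<rfloor>)"
  have pre1: "ta_run A (init A) (\<lambda>_. 0) 0 (pre @ [(T + d, a)]) q1 v1 T1"
    unfolding v1_def T1_def
    by (rule run_append[OF run_step.prems run_single[OF run_step.hyps(1-3)]])
  obtain trD1 where IH: "ta_run (discretize A) (q1, r1) (\<lambda>_. 0) (real_of_int \<lfloor>T1\<rfloor> + fl T1) trD1
            (q', region_of A (ext v' T')) (\<lambda>_. 0) (real_of_int \<lfloor>T'\<rfloor> + fl T')"
     "map snd trD1 = map snd tr"
     "\<forall>i<length tr. fst (trD1 ! i) = real_of_int \<lfloor>fst (tr ! i)\<rfloor> + fl (fst (tr ! i))"
    using run_step.IH[OF pre1[unfolded v1_def T1_def]] unfolding r1_def v1_def T1_def by blast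
  have mono: "\<lfloor>T\<rfloor> \<le> \<lfloor>T1\<rfloor>" unfolding T1_def using run_step.hyps(1) by (intro floor_mono) simp
  have mW: "m \<in> W" unfolding W_def edge_weights_def
    using run_step.prems run_step.hyps(1-3) self_in_region mono
    unfolding r_def r1_def v1_def T1_def m_def by fastforce
  have locs: "q \<in> locs A" "q1 \<in> locs A" using wf_trans_locs[OF wf run_step.hyps(2)] by auto
  have regs: "r \<in> regions A" "r1 \<in> regions A" unfolding r_def r1_def by (auto intro: region_of_in)
  have del: "shift_delta r r1 = fl T1 - fl T"
    by (rule shift_delta_fl[OF regs(1) _ regs(2)]) (auto simp: r_def r1_def intro: self_in_region)
  define dd where "dd = real m + shift_delta r r1"
  have dd0: "dd \<ge> 0" and ddt: "real_of_int \<lfloor>T\<rfloor> + fl T + dd = real_of_int \<lfloor>T1\<rfloor> + fl T1"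
    unfolding dd_def del m_def T1_def using fl_step[OF run_step.hyps(1)] by auto
  have "\<exists>g'. ((q, r), a, g', {()}, (q1, r1)) \<in> trans (discretize A) \<and> sat g' (shift (\<lambda>_. 0) dd)"
  proof (cases "has_tail W \<and> tail_start W \<le> m")
    case True
    show ?thesis
      by (rule exI, rule conjI, rule disc_Ge[OF locs regs]) (use True in \<open>auto simp: W_def sat_single dd_def\<close>)
  next
    case False
    show ?thesis
      by (rule exI, rule conjI, rule disc_Eq[OF locs regs]) (use False mW in \<open>auto simp: W_def sat_single dd_def\<close>)
  qed
  then obtain g' where g': "((q, r), a, g', {()}, (q1, r1)) \<in> trans (discretize A)" "sat g' (shift (\<lambda>_. 0) dd)"
    by blast
  have "ta_run (discretize A) (q, r) (\<lambda>_. 0) (real_of_int \<lfloor>T\<rfloor> + fl T)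
          ((real_of_int \<lfloor>T\<rfloor> + fl T + dd, a) # trD1)
          (q', region_of A (ext v' T')) (\<lambda>_. 0) (real_of_int \<lfloor>T'\<rfloor> + fl T')"
    by (rule ta_run.run_step[OF dd0 g']) (use IH(1) ddt in \<open>simp add: reset_unit\<close>)
  moreover have "map snd ((real_of_int \<lfloor>T\<rfloor> + fl T + dd, a) # trD1) = map snd ((T + d, a) # tr)"
    using IH(2) by simp
  moreover have "\<forall>i<length ((T + d, a) # tr). fst (((real_of_int \<lfloor>T\<rfloor> + fl T + dd, a) # trD1) ! i)
        = real_of_int \<lfloor>fst (((T + d, a) # tr) ! i)\<rfloor> + fl (fst (((T + d, a) # tr) ! i))"
  proof (intro allI impI)
    fix i assume i: "i < length ((T + d, a) # tr)"
    show "fst (((real_of_int \<lfloor>T\<rfloor> + fl T + dd, a) # trD1) ! i)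
        = real_of_int \<lfloor>fst (((T + d, a) # tr) ! i)\<rfloor> + fl (fst (((T + d, a) # tr) ! i))"
    proof (cases i)
      case 0 then show ?thesis using ddt unfolding T1_def by simp
    next
      case (Suc j) then show ?thesis using IH(3) i by simp
    qed
  qed
  ultimately show ?case unfolding r_def by blast
qed



lemma disc_trans_cases:
  assumes "((q, r), a, g, R, (q1, r1)) \<in> trans (discretize A)"
  obtains (Eq) m where "g = [((), Eq, real m + shift_delta r r1)]" "R = {()}" "q \<in> locs A" "q1 \<in> locs A"
      "r \<in> regions A" "r1 \<in> regions A" "m \<in> edge_weights A q r a q1 r1"
      "has_tail (edge_weights A q r a q1 r1) \<longrightarrow> m < tail_start (edge_weights A q r a q1 r1)"
  | (Ge) "g = [((), Ge, real (tail_start (edge_weights A q r a q1 r1)) + shift_delta r r1)]" "R = {()}"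
      "q \<in> locs A" "q1 \<in> locs A" "r \<in> regions A" "r1 \<in> regions A"
      "has_tail (edge_weights A q r a q1 r1)"
proof -
  have "((q, r), a, g, R, (q1, r1)) \<in> {((q, r), a, [((), Eq, real m + shift_delta r r')], {()}, (q', r')) | q r a q' r' m.
          q \<in> locs A \<and> q' \<in> locs A \<and> r \<in> regions A \<and> r' \<in> regions A \<and>
          m \<in> edge_weights A q r a q' r' \<and>
          (has_tail (edge_weights A q r a q' r') \<longrightarrow> m < tail_start (edge_weights A q r a q' r'))}
       \<or>
        ((q, r), a, g, R, (q1, r1)) \<in> {((q, r), a, [((), Ge, real (tail_start (edge_weights A q r a q' r')) + shift_delta r r')],
          {()}, (q', r')) | q r a q' r'.
          q \<in> locs A \<and> q' \<in> locs A \<and> r \<in> regions A \<and> r' \<in> regions A \<and>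
          has_tail (edge_weights A q r a q' r')}"
    using assms unfolding trans_disc by (rule UnE) auto
  then show ?thesis
  proof
    assume "((q, r), a, g, R, (q1, r1)) \<in> {((q, r), a, [((), Eq, real m + shift_delta r r')], {()}, (q', r')) | q r a q' r' m.
          q \<in> locs A \<and> q' \<in> locs A \<and> r \<in> regions A \<and> r' \<in> regions A \<and>
          m \<in> edge_weights A q r a q' r' \<and>
          (has_tail (edge_weights A q r a q' r') \<longrightarrow> m < tail_start (edge_weights A q r a q' r'))}"
    then obtain m where "g = [((), Eq, real m + shift_delta r r1)]" "R = {()}" "q \<in> locs A" "q1 \<in> locs A"
      "r \<in> regions A" "r1 \<in> regions A" "m \<in> edge_weights A q r a q1 r1"
      "has_tail (edge_weights A q r a q1 r1) \<longrightarrow> m < tail_start (edge_weights A q r a q1 r1)"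
      by (simp only: mem_Collect_eq) auto
    then show ?thesis by (rule Eq)
  next
    assume "((q, r), a, g, R, (q1, r1)) \<in> {((q, r), a, [((), Ge, real (tail_start (edge_weights A q r a q' r')) + shift_delta r r')],
          {()}, (q', r')) | q r a q' r'.
          q \<in> locs A \<and> q' \<in> locs A \<and> r \<in> regions A \<and> r' \<in> regions A \<and>
          has_tail (edge_weights A q r a q' r')}"
    then have "g = [((), Ge, real (tail_start (edge_weights A q r a q1 r1)) + shift_delta r r1)]" "R = {()}"
      "q \<in> locs A" "q1 \<in> locs A" "r \<in> regions A" "r1 \<in> regions A"
      "has_tail (edge_weights A q r a q1 r1)"
      by (simp only: mem_Collect_eq; auto)+
    then show ?thesis by (rule Ge)
  qed
qed

lemma round_bounds: fixes x :: real shows "-1/2 \<le> x - \<lfloor>x + 1/2\<rfloor> \<and> x - \<lfloor>x + 1/2\<rfloor> < 1/2"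
  using of_int_floor_le[of "x + 1/2"] real_of_int_floor_add_one_gt[of "x + 1/2"] by linarith

definition Dv :: "real \<Rightarrow> real \<Rightarrow> real" where "Dv S T = S - fl T - real_of_int \<lfloor>T\<rfloor>"

lemma dir2:
  assumes wf: "wf_ta A"
  shows "ta_run (discretize A) qr vv S tr qr' vv' S' \<Longrightarrow> qr = (q, r) \<Longrightarrow> vv = (\<lambda>_. 0) \<Longrightarrow>
    r \<in> regions A \<Longrightarrow> ext v T \<in> r \<Longrightarrow> -1/2 \<le> Dv S T \<Longrightarrow> Dv S T < 1/2 \<Longrightarrow>
   \<exists>trA v' T'. ta_run A q v T trA (fst qr') v' T' \<and> map snd trA = map snd tr \<and>
      (\<forall>i<length tr. -1/2 \<le> Dv (fst (tr ! i)) (fst (trA ! i)) \<and> Dv (fst (tr ! i)) (fst (trA ! i)) < 1/2)"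
proof (induction arbitrary: q r v T rule: ta_run.induct)
  case (run_nil qr vv S)
  show ?case by (rule exI[of _ "[]"]) (use run_nil in \<open>auto intro: ta_run.run_nil\<close>)
next
  case (run_step d qr a g R qr1 vv S tr qr' vv' S')
  obtain q1 r1 where qr1: "qr1 = (q1, r1)" by (cases qr1)
  have tr: "((q, r), a, g, R, (q1, r1)) \<in> trans (discretize A)" using run_step.hyps(2) run_step.prems(1) qr1 by simp
  have sat: "sat g (shift (\<lambda>_. 0) d)" using run_step.hyps(3) run_step.prems(2) by simp
  define W where "W = edge_weights A q r a q1 r1"
  define D0 where "D0 = Dv S T"
  have "\<exists>n. n \<in> W \<and> d - shift_delta r r1 - real n + D0 = (if has_tail W \<and> (\<exists>k. g = [((), Ge, k)]) then
          (d - shift_delta r r1 + D0) - \<lfloor>d - shift_delta r r1 + D0 + 1/2\<rfloor> else D0)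
        \<and> r1 \<in> regions A \<and> R = {()}"
    using tr
  proof (cases rule: disc_trans_cases)
    case (Eq m)
    have "d = real m + shift_delta r r1" using sat Eq(1) by (simp add: sat_single)
    then show ?thesis using Eq unfolding W_def by (intro exI[of _ m]) auto
  next
    case Ge
    have dge: "d \<ge> real (tail_start W) + shift_delta r r1" using sat Ge(1) unfolding W_def by (simp add: sat_single)
    define x where "x = d - shift_delta r r1 + D0"
    have "x + 1/2 \<ge> real (tail_start W)" using dge run_step.prems(5) unfolding x_def D0_def by simp
    then have fl: "\<lfloor>x + 1/2\<rfloor> \<ge> int (tail_start W)" by (simp add: le_floor_iff)
    define n where "n = nat \<lfloor>x + 1/2\<rfloor>"
    have nn: "real n = real_of_int \<lfloor>x + 1/2\<rfloor>" unfolding n_def using fl by simp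
    have "n \<ge> tail_start W" unfolding n_def using fl by simp
    then have "n \<in> W" using tail_in Ge(7) unfolding W_def by blast
    then show ?thesis using Ge nn unfolding W_def x_def by (intro exI[of _ n]) auto
  qed
  then obtain n where n: "n \<in> W" and nD: "d - shift_delta r r1 - real n + D0 = (if has_tail W \<and> (\<exists>k. g = [((), Ge, k)]) then
          (d - shift_delta r r1 + D0) - \<lfloor>d - shift_delta r r1 + D0 + 1/2\<rfloor> else D0)"
    and r1: "r1 \<in> regions A" and R: "R = {()}" by blast
  obtain dA g0 R0 where st: "dA \<ge> 0" "(q,a,g0,R0,q1) \<in> trans A" "sat g0 (shift v dA)"
     "ext (reset R0 (shift v dA)) (T + dA) \<in> r1" "int n = \<lfloor>T + dA\<rfloor> - \<lfloor>T\<rfloor>"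
    using edge_step[OF wf run_step.prems(3) r1 run_step.prems(4) n[unfolded W_def]] by blast
  define v1 where "v1 = reset R0 (shift v dA)"
  define T1 where "T1 = T + dA"
  have del: "shift_delta r r1 = fl T1 - fl T"
    by (rule shift_delta_fl[OF run_step.prems(3,4) r1]) (use st(4) in \<open>simp add: v1_def T1_def\<close>)
  have D1eq: "Dv (S + d) T1 = d - shift_delta r r1 - real n + D0"
    unfolding Dv_def D0_def del using st(5) unfolding T1_def by simp
  have D1: "-1/2 \<le> Dv (S + d) T1 \<and> Dv (S + d) T1 < 1/2"
    unfolding D1eq nD using round_bounds[of "d - shift_delta r r1 + D0"] run_step.prems(5,6) unfolding D0_def
    by (simp only: if_split) auto
  have vv1: "reset R (shift vv d) = (\<lambda>_. 0)" using R by (simp add: reset_unit)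
  obtain trA1 v' T' where IH: "ta_run A q1 v1 T1 trA1 (fst qr') v' T'" "map snd trA1 = map snd tr"
      "\<forall>i<length tr. -1/2 \<le> Dv (fst (tr ! i)) (fst (trA1 ! i)) \<and> Dv (fst (tr ! i)) (fst (trA1 ! i)) < 1/2"
    using run_step.IH[OF qr1 vv1 r1 st(4)[folded v1_def T1_def] ] D1 by blast
  have "ta_run A q v T ((T + dA, a) # trA1) (fst qr') v' T'"
    by (rule ta_run.run_step[OF st(1-3)]) (use IH(1) in \<open>simp add: v1_def T1_def\<close>)
  moreover have "map snd ((T + dA, a) # trA1) = map snd ((S + d, a) # tr)" using IH(2) by simp
  moreover have "\<forall>i<length ((S + d, a) # tr). -1/2 \<le> Dv (fst (((S + d, a) # tr) ! i)) (fst (((T + dA, a) # trA1) ! i)) \<and>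
       Dv (fst (((S + d, a) # tr) ! i)) (fst (((T + dA, a) # trA1) ! i)) < 1/2"
  proof (intro allI impI)
    fix i assume i: "i < length ((S + d, a) # tr)"
    show "-1/2 \<le> Dv (fst (((S + d, a) # tr) ! i)) (fst (((T + dA, a) # trA1) ! i)) \<and>
       Dv (fst (((S + d, a) # tr) ! i)) (fst (((T + dA, a) # trA1) ! i)) < 1/2"
    proof (cases i)
      case 0 then show ?thesis using D1 unfolding T1_def by simp
    next
      case (Suc j) then show ?thesis using IH(3) i by simp
    qed
  qed
  ultimately show ?case by blast
qed



lemma trace_dist_le:
  assumes "map snd t1 = map snd t2" "\<forall>i<length t1. \<bar>fst (t1 ! i) - fst (t2 ! i)\<bar> \<le> 1/2"
  shows "trace_dist t1 t2 \<le> ereal (1/2)"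
proof -
  have eq: "{\<bar>fst (t1 ! i) - fst (t2 ! i)\<bar> | i. i < length t1} = (\<lambda>i. \<bar>fst (t1 ! i) - fst (t2 ! i)\<bar>) ` {..<length t1}"
    by auto
  have fin: "finite (insert 0 {\<bar>fst (t1 ! i) - fst (t2 ! i)\<bar> | i. i < length t1})" unfolding eq by simp
  have "Max (insert 0 {\<bar>fst (t1 ! i) - fst (t2 ! i)\<bar> | i. i < length t1}) \<le> 1/2"
    using fin assms(2) by (subst Max_le_iff) auto
  then show ?thesis unfolding trace_dist_def using assms(1) by simp
qed

lemma conf_dist_le:
  assumes "\<forall>t1\<in>L1. \<exists>t2\<in>L2. trace_dist t1 t2 \<le> ereal (1/2)"
  shows "conf_dist L1 L2 \<le> ereal (1/2)"
  unfolding conf_dist_def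
proof (rule SUP_least)
  fix t1 assume "t1 \<in> L1"
  then obtain t2 where "t2 \<in> L2" "trace_dist t1 t2 \<le> ereal (1/2)" using assms by blast
  then show "(INF t2\<in>L2. trace_dist t1 t2) \<le> ereal (1/2)" by (rule INF_lower2)
qed

lemma ext_zero: "ext (\<lambda>_. 0) 0 = (\<lambda>_. 0)"
  by (auto simp: ext_def split: option.split)

lemma dir1_lang:
  assumes wf: "wf_ta A" and t: "t1 \<in> lang A"
  shows "\<exists>t2\<in>lang (discretize A). trace_dist t1 t2 \<le> ereal (1/2)"
proof -
  from t obtain q' v' T' where run: "ta_run A (init A) (\<lambda>_. 0) 0 t1 q' v' T'" "q' \<in> acc A"
    unfolding lang_def by blast
  obtain trD where D: "ta_run (discretize A) (init A, region_of A (ext (\<lambda>_. 0) 0)) (\<lambda>_. 0) (real_of_int \<lfloor>0::real\<rfloor> + fl 0) trD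
            (q', region_of A (ext v' T')) (\<lambda>_. 0) (real_of_int \<lfloor>T'\<rfloor> + fl T')"
      "map snd trD = map snd t1"
      "\<forall>i<length t1. fst (trD ! i) = real_of_int \<lfloor>fst (t1 ! i)\<rfloor> + fl (fst (t1 ! i))"
    using dir1[OF wf run(1) ta_run.run_nil] by blast
  have "ta_run (discretize A) (init (discretize A)) (\<lambda>_. 0) 0 trD (q', region_of A (ext v' T')) (\<lambda>_. 0) (real_of_int \<lfloor>T'\<rfloor> + fl T')"
    using D(1) unfolding init_disc ext_zero by (simp add: fl_def)
  moreover have "(q', region_of A (ext v' T')) \<in> acc (discretize A)"
    unfolding acc_disc using run(2) region_of_in by blast
  ultimately have "trD \<in> lang (discretize A)" unfolding lang_def by blast
  moreover have "trace_dist t1 trD \<le> ereal (1/2)"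
  proof (rule trace_dist_le)
    show "map snd t1 = map snd trD" using D(2) by simp
    show "\<forall>i<length t1. \<bar>fst (t1 ! i) - fst (trD ! i)\<bar> \<le> 1/2"
    proof (intro allI impI)
      fix i assume i: "i < length t1"
      let ?x = "fst (t1 ! i)"
      have "0 \<le> frac ?x" "frac ?x < 1" by (auto simp: frac_lt_1)
      moreover have "?x = real_of_int \<lfloor>?x\<rfloor> + frac ?x" unfolding frac_def by simp
      moreover have "fst (trD ! i) = real_of_int \<lfloor>?x\<rfloor> + fl ?x" using D(3) i by blast
      moreover have "fl ?x = (if frac ?x = 0 then 0 else 1/2)" by (rule fl_def)
      ultimately have "-1/2 \<le> ?x - fst (trD ! i) \<and> ?x - fst (trD ! i) \<le> 1/2"
      proof (cases "frac ?x = 0")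
        case True
        have "fl ?x = 0" unfolding fl_def using True by (simp only: if_True simp_thms)
        then show ?thesis using True \<open>?x = real_of_int \<lfloor>?x\<rfloor> + frac ?x\<close> \<open>fst (trD ! i) = real_of_int \<lfloor>?x\<rfloor> + fl ?x\<close> by (intro conjI) linarith+
      next
        case False
        have "fl ?x = 1/2" unfolding fl_def using False by (simp only: if_False)
        then show ?thesis using \<open>0 \<le> frac ?x\<close> \<open>frac ?x < 1\<close> \<open>?x = real_of_int \<lfloor>?x\<rfloor> + frac ?x\<close> \<open>fst (trD ! i) = real_of_int \<lfloor>?x\<rfloor> + fl ?x\<close> by (intro conjI) linarith+
      qed
      then show "\<bar>fst (t1 ! i) - fst (trD ! i)\<bar> \<le> 1/2" by (intro abs_leI) linarith+
    qed
  qed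
  ultimately show ?thesis by blast
qed

definition phiD :: "real \<Rightarrow> real \<Rightarrow> real" where
  "phiD Dm f = (if f = 0 then 0 else Dm + (1/2 - Dm) * f)"

lemma phiD_ok: assumes "0 \<le> Dm" "Dm < 1/2" shows "phi_ok (phiD Dm)"
proof
  show "phiD Dm 0 = 0" unfolding phiD_def by simp
next
  fix f g :: real assume fg: "0 \<le> f" "f < g" "g < 1"
  have p: "0 < 1/2 - Dm" using assms by simp
  show "phiD Dm f < phiD Dm g"
  proof (cases "f = 0")
    case True
    have "0 < (1/2 - Dm) * g" using p fg by simp
    moreover have "phiD Dm g = Dm + (1/2 - Dm) * g" using fg True unfolding phiD_def by auto
    moreover have "phiD Dm f = 0" using True unfolding phiD_def by simp
    ultimately show ?thesis using assms by linarith
  next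
    case False
    have "(1/2 - Dm) * f < (1/2 - Dm) * g" using p fg by simp
    then show ?thesis using False fg unfolding phiD_def by simp
  qed
next
  fix f :: real assume f: "0 \<le> f" "f < 1"
  have p: "0 < 1/2 - Dm" using assms by simp
  have "0 \<le> (1/2 - Dm) * f" using p f by simp
  moreover have "(1/2 - Dm) * f \<le> (1/2 - Dm) * 1" using p f by (intro mult_left_mono) auto
  then have h1: "(1/2 - Dm) * f \<le> 1/2 - Dm" by (simp only: mult_1_right)
  ultimately show "0 \<le> phiD Dm f \<and> phiD Dm f < 1"
  proof (cases "f = 0")
    case True then show ?thesis unfolding phiD_def by simp
  next
    case False
    then have "phiD Dm f = Dm + (1/2 - Dm) * f" unfolding phiD_def by simp
    then show ?thesis using \<open>0 \<le> (1/2 - Dm) * f\<close> h1 assms by (intro conjI) linarith+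
  qed
qed

lemma dir2_lang:
  assumes wf: "wf_ta A" and t: "t1 \<in> lang (discretize A)"
  shows "\<exists>t2\<in>lang A. trace_dist t1 t2 \<le> ereal (1/2)"
proof -
  from t obtain qf vv' S' where run: "ta_run (discretize A) (init (discretize A)) (\<lambda>_. 0) 0 t1 qf vv' S'"
    "qf \<in> acc (discretize A)" unfolding lang_def by blast
  have "ext (\<lambda>_. 0) 0 \<in> region_of A (\<lambda>_. 0)" unfolding ext_zero by (rule self_in_region)
  then obtain trA v' T' where A: "ta_run A (init A) (\<lambda>_. 0) 0 trA (fst qf) v' T'" "map snd trA = map snd t1"
      "\<forall>i<length t1. -1/2 \<le> Dv (fst (t1 ! i)) (fst (trA ! i)) \<and> Dv (fst (t1 ! i)) (fst (trA ! i)) < 1/2"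
    using dir2[OF wf run(1)[unfolded init_disc] refl refl region_of_in, of "\<lambda>_. 0" 0]
    by (auto simp: Dv_def fl_def)
  have qf: "fst qf \<in> acc A" using run(2) unfolding acc_disc by auto
  have len: "length trA = length t1" using arg_cong[OF A(2), of length] by simp
  define DS where "DS = insert 0 {Dv (fst (t1 ! i)) (fst (trA ! i)) | i. i < length t1}"
  have eq: "{Dv (fst (t1 ! i)) (fst (trA ! i)) | i. i < length t1} = (\<lambda>i. Dv (fst (t1 ! i)) (fst (trA ! i))) ` {..<length t1}"
    by auto
  have finDS: "finite DS" unfolding DS_def eq by simp
  define Dm where "Dm = Max DS"
  have Dm0: "0 \<le> Dm" unfolding Dm_def DS_def using finDS[unfolded DS_def] by simp
  have "Dm \<in> DS" unfolding Dm_def using finDS by (intro Max_in) (auto simp: DS_def)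
  then have Dm1: "Dm < 1/2" unfolding DS_def using A(3) by auto
  have Dmi: "\<And>i. i < length t1 \<Longrightarrow> Dv (fst (t1 ! i)) (fst (trA ! i)) \<le> Dm"
    unfolding Dm_def using finDS by (intro Max_ge) (auto simp: DS_def)
  interpret phi_ok "phiD Dm" by (rule phiD_ok[OF Dm0 Dm1])
  have ints: "\<And>q a g R q' c op n. (q,a,g,R,q') \<in> trans A \<Longrightarrow> (c,op,n) \<in> set g \<Longrightarrow> n \<in> \<int>"
    using wf_guard[OF wf] Nats_subset_Ints by blast
  define trW where "trW = map (\<lambda>(s,a). (warp (phiD Dm) s, a)) trA"
  have "ta_run A (init A) (\<lambda>c. warp (phiD Dm) 0 - warp (phiD Dm) (0 - 0)) (warp (phiD Dm) 0) trW (fst qf)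
          (\<lambda>c. warp (phiD Dm) T' - warp (phiD Dm) (T' - v' c)) (warp (phiD Dm) T')"
    unfolding trW_def by (rule warp_run[OF ints A(1)])
  then have "ta_run A (init A) (\<lambda>_. 0) 0 trW (fst qf)
          (\<lambda>c. warp (phiD Dm) T' - warp (phiD Dm) (T' - v' c)) (warp (phiD Dm) T')"
    by (simp add: warp_0)
  then have inL: "trW \<in> lang A" unfolding lang_def using qf by blast
  have "trace_dist t1 trW \<le> ereal (1/2)"
  proof (rule trace_dist_le)
    show "map snd t1 = map snd trW" unfolding trW_def using A(2) by (induction trA arbitrary: t1) (auto simp: case_prod_beta)
    show "\<forall>i<length t1. \<bar>fst (t1 ! i) - fst (trW ! i)\<bar> \<le> 1/2"
    proof (intro allI impI)
      fix i assume i: "i < length t1"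
      let ?R = "fst (trA ! i)"
      let ?S = "fst (t1 ! i)"
      have w: "fst (trW ! i) = warp (phiD Dm) ?R" unfolding trW_def using i len by (simp add: case_prod_beta)
      have b: "-1/2 \<le> Dv ?S ?R" "Dv ?S ?R < 1/2" "Dv ?S ?R \<le> Dm" using A(3) i Dmi by auto
      have fr: "0 \<le> frac ?R" "frac ?R < 1" by (auto simp: frac_lt_1)
      have p: "0 < 1/2 - Dm" using Dm1 by simp
      have m: "0 \<le> (1/2 - Dm) * frac ?R" "(1/2 - Dm) * frac ?R \<le> (1/2 - Dm) * 1" using p fr by (simp, intro mult_left_mono, auto)
      have m2: "(1/2 - Dm) * frac ?R \<le> 1/2 - Dm" using m(2) by (simp only: mult_1_right)
      have ww: "fst (trW ! i) = real_of_int \<lfloor>?R\<rfloor> + phiD Dm (frac ?R)" unfolding w warp_def ..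
      have dv: "Dv ?S ?R = ?S - fl ?R - real_of_int \<lfloor>?R\<rfloor>" by (rule Dv_def)
      have "-1/2 \<le> ?S - fst (trW ! i) \<and> ?S - fst (trW ! i) \<le> 1/2"
      proof (cases "frac ?R = 0")
        case True
        have "fl ?R = 0" unfolding fl_def using True by (simp only: if_True simp_thms)
        moreover have "phiD Dm (frac ?R) = 0" unfolding phiD_def using True by (simp only: if_True simp_thms)
        ultimately show ?thesis using b ww dv by (intro conjI) linarith+
      next
        case False
        have "0 < (1/2 - Dm) * frac ?R" using p False fr by simp
        moreover have "fl ?R = 1/2" unfolding fl_def using False by (simp only: if_False)
        moreover have "phiD Dm (frac ?R) = Dm + (1/2 - Dm) * frac ?R" unfolding phiD_def using False by (simp only: if_False)
        ultimately show ?thesis using b m(1) m2 ww dv Dm0 by (intro conjI) linarith+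
      qed
      then show "\<bar>fst (t1 ! i) - fst (trW ! i)\<bar> \<le> 1/2" by (intro abs_leI) linarith+
    qed
  qed
  then show ?thesis using inL by blast
qed

theorem theorem2:
  fixes A :: "('q, 'a, 'c) ta"
  assumes "wf_ta A"
  shows "lang_dist (lang A) (lang (discretize A)) \<le> ereal (1/2)"
proof -
  have "conf_dist (lang A) (lang (discretize A)) \<le> ereal (1/2)"
    by (rule conf_dist_le) (use dir1_lang[OF assms] in blast)
  moreover have "conf_dist (lang (discretize A)) (lang A) \<le> ereal (1/2)"
    by (rule conf_dist_le) (use dir2_lang[OF assms] in blast)
  ultimately show ?thesis unfolding lang_dist_def by simp
qed


end
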